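(* Let $\varLambda\subseteq\mathbb{Z}$ be relatively dense in $\mathbb{R}$, and assume that the density autocorrelation $\gamma:=\gamma_{\mathrm{dens}}$ of $\varLambda$ exists with respect to $\mathcal{A}=([-n,n])_n$. For each $n\ge3$ set $\varGamma_n=n!+(\varLambda\cap[-n,n])$ and define $\varGamma=\bigcup_{n\ge3}\varGamma_n$ (a disjoint union). Then, with respect to $\mathcal{A}$: (a) the density of $\varGamma$ exists and equals $0$, i.e. $\lim_{n\to\infty}\frac{\mathrm{card}(\varGamma\cap[-n,n])}{2n}=0$; (b) the counting autocorrelation of $\varGamma$ exists and $\gamma_{\mathrm{count}}=C\gamma$, where $C=\frac{1}{\gamma(\{0\})}=\frac{1}{\mathrm{dens}(\varLambda)}\neq0$, with $\mathrm{dens}(\varLambda)=\lim_{n\to\infty}\frac{\mathrm{card}(\varLambda\cap[-n,n])}{2n}$.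
   Context: For a locally finite $X\subseteq\mathbb{R}$ and $A_n=[-n,n]$, let $F_n=X\cap A_n$. The density autocorrelation of $X$ is the vague limit (convergence on all compactly supported continuous functions) $\gamma_{\mathrm{dens}}=\lim_n\frac{1}{2n}\sum_{x,y\in F_n}\delta_{x-y}$, and the counting autocorrelation is the vague limit $\gamma_{\mathrm{count}}=\lim_n\gamma_{F_n}$, where $\gamma_F=\frac{1}{\mathrm{card}(F)}\sum_{x,y\in F}\delta_{x-y}$ for finite nonempty $F$ and $\gamma_\emptyset=0$. Relatively dense means there is $R>0$ such that every interval of length $R$ meets $\varLambda$. *)

theory Defs
  imports "HOL-Analysis.Analysis"
begin

definition window :: "real set \<Rightarrow> nat \<Rightarrow> real set" where
  "window X n = X \<inter> {- real n .. real n}"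

definition rel_dense :: "real set \<Rightarrow> bool" where
  "rel_dense L \<longleftrightarrow> (\<exists>R>0. \<forall>a. \<exists>x\<in>L. a \<le> x \<and> x \<le> a + R)"

definition test_fun :: "(real \<Rightarrow> real) \<Rightarrow> bool" where
  "test_fun \<phi> \<longleftrightarrow> continuous_on UNIV \<phi> \<and> compact (closure {x. \<phi> x \<noteq> 0})"

text \<open>The finite measure \<open>\<Sum>_{x,y\<in>F} \<delta>_{x-y}\<close>, acting on a test function.\<close>
definition diff_sum :: "real set \<Rightarrow> (real \<Rightarrow> real) \<Rightarrow> real" where
  "diff_sum F \<phi> = (\<Sum>p\<in>F \<times> F. \<phi> (fst p - snd p))"

definition gamma_fin :: "real set \<Rightarrow> (real \<Rightarrow> real) \<Rightarrow> real" where
  "gamma_fin F \<phi> = (if F = {} then 0 else diff_sum F \<phi> / real (card F))"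

text \<open>Vague convergence of a sequence of (finite, given as functionals) measures to a
  locally finite Borel measure \<open>\<gamma>\<close> on \<open>\<real>\<close>.\<close>
definition vague_limit :: "(nat \<Rightarrow> (real \<Rightarrow> real) \<Rightarrow> real) \<Rightarrow> real measure \<Rightarrow> bool" where
  "vague_limit \<mu> \<gamma> \<longleftrightarrow>
     sets \<gamma> = sets borel \<and> (\<forall>K. compact K \<longrightarrow> emeasure \<gamma> K < \<infinity>) \<and>
     (\<forall>\<phi>. test_fun \<phi> \<longrightarrow> (\<lambda>n. \<mu> n \<phi>) \<longlonglongrightarrow> integral\<^sup>L \<gamma> \<phi>)"

definition is_dens_autocorr :: "real set \<Rightarrow> real measure \<Rightarrow> bool" where
  "is_dens_autocorr X \<gamma> \<longleftrightarrow>
     vague_limit (\<lambda>n \<phi>. diff_sum (window X n) \<phi> / (2 * real n)) \<gamma>"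

definition is_count_autocorr :: "real set \<Rightarrow> real measure \<Rightarrow> bool" where
  "is_count_autocorr X \<gamma> \<longleftrightarrow> vague_limit (\<lambda>n \<phi>. gamma_fin (window X n) \<phi>) \<gamma>"

definition has_density :: "real set \<Rightarrow> real \<Rightarrow> bool" where
  "has_density X d \<longleftrightarrow> (\<lambda>n. real (card (window X n)) / (2 * real n)) \<longlonglongrightarrow> d"

end

theory Submission
  imports Defs
begin


lemma finite_window: assumes "\<Lambda> \<subseteq> \<int>" shows "finite (window \<Lambda> n)"
proof -
  have "window \<Lambda> n \<subseteq> {x \<in> \<int>. - real n \<le> x \<and> x \<le> real n}" using assms unfolding window_def by auto
  then show ?thesis using finite_int_segment finite_subset by blast
qed

lemma meas_gamma:
  assumes "sets \<gamma> = sets borel" "continuous_on UNIV (f::real\<Rightarrow>real)"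
  shows "f \<in> borel_measurable \<gamma>"
  unfolding measurable_cong_sets[OF assms(1) refl] by (rule borel_measurable_continuous_onI[OF assms(2)])

lemma test_fun_supp:
  assumes "continuous_on UNIV \<phi>" "\<And>x. \<bar>x\<bar> > K \<Longrightarrow> \<phi> x = 0"
  shows "test_fun \<phi>"
proof -
  have "{x. \<phi> x \<noteq> 0} \<subseteq> {-K..K}" using assms(2) by force
  then have "closure {x. \<phi> x \<noteq> 0} \<subseteq> {-K..K}" by (simp add: closure_minimal)
  then show ?thesis unfolding test_fun_def using assms(1)
    by (meson compact_Icc compact_imp_bounded bounded_subset closed_closure compact_eq_bounded_closed)
qed

definition tent :: "nat \<Rightarrow> real \<Rightarrow> real" where
  "tent k x = max 0 (1 - real (Suc k) * \<bar>x\<bar>)"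

lemma tent_cont: "continuous_on UNIV (tent k)"
  unfolding tent_def by (intro continuous_intros)

lemma tent_test: "test_fun (tent k)"
proof (rule test_fun_supp[OF tent_cont, of 1])
  fix x :: real assume "\<bar>x\<bar> > 1"
  then have "real (Suc k) * \<bar>x\<bar> \<ge> 1"
    using mult_mono[of 1 "real (Suc k)" 1 "\<bar>x\<bar>"] by simp
  then show "tent k x = 0" unfolding tent_def by simp
qed

lemma tent_int: assumes "x \<in> \<int>" shows "tent k x = (if x = 0 then 1 else 0)"
proof (cases "x = 0")
  case False
  then have "\<bar>x\<bar> \<ge> 1" using assms by (metis Ints_nonzero_abs_ge1)
  then have "real (Suc k) * \<bar>x\<bar> \<ge> 1"
    using mult_mono[of 1 "real (Suc k)" 1 "\<bar>x\<bar>"] by simp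
  then show ?thesis using False unfolding tent_def by simp
qed (simp add: tent_def)

lemma diff_sum_tent:
  assumes "F \<subseteq> \<int>" "finite F"
  shows "diff_sum F (tent k) = real (card F)"
proof -
  have "diff_sum F (tent k) = (\<Sum>x\<in>F. \<Sum>y\<in>F. tent k (x - y))"
    unfolding diff_sum_def by (simp add: sum.cartesian_product case_prod_unfold)
  also have "\<dots> = (\<Sum>x\<in>F. \<Sum>y\<in>F. (if x = y then 1 else 0))"
  proof (intro sum.cong refl)
    fix x y assume "x \<in> F" "y \<in> F"
    then have "x - y \<in> \<int>" using assms(1) by (auto intro: Ints_diff)
    then show "tent k (x - y) = (if x = y then 1 else 0)" by (simp add: tent_int)
  qed
  also have "\<dots> = (\<Sum>x\<in>F. 1)" using assms(2) by (intro sum.cong refl) simp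
  finally show ?thesis by simp
qed

lemma dens_gamma0:
  assumes "\<Lambda> \<subseteq> \<int>" "is_dens_autocorr \<Lambda> \<gamma>"
  shows "(\<lambda>n. real (card (window \<Lambda> n)) / (2 * real n)) \<longlonglongrightarrow> measure \<gamma> {0}"
proof -
  have V: "sets \<gamma> = sets borel" "\<And>K. compact K \<Longrightarrow> emeasure \<gamma> K < \<infinity>"
    "\<And>\<phi>. test_fun \<phi> \<Longrightarrow> (\<lambda>n. diff_sum (window \<Lambda> n) \<phi> / (2 * real n)) \<longlonglongrightarrow> integral\<^sup>L \<gamma> \<phi>"
    using assms(2) unfolding is_dens_autocorr_def vague_limit_def by auto
  have ds: "diff_sum (window \<Lambda> n) (tent k) = real (card (window \<Lambda> n))" for n k
    using assms(1) by (intro diff_sum_tent finite_window) (auto simp: window_def)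
  have lim: "(\<lambda>n. real (card (window \<Lambda> n)) / (2 * real n)) \<longlonglongrightarrow> integral\<^sup>L \<gamma> (tent k)" for k
    using V(3)[OF tent_test[of k]] by (simp add: ds)
  have eq: "integral\<^sup>L \<gamma> (tent k) = integral\<^sup>L \<gamma> (tent 0)" for k
    using LIMSEQ_unique[OF lim[of k] lim[of 0]] .
  have sets: "{-1..1::real} \<in> sets \<gamma>" "{0::real} \<in> sets \<gamma>" using V(1) by auto
  have fin: "emeasure \<gamma> {-1..1::real} < \<infinity>" "emeasure \<gamma> {0::real} < \<infinity>"
    using V(2) by auto
  have "(\<lambda>k. integral\<^sup>L \<gamma> (tent k)) \<longlonglongrightarrow> integral\<^sup>L \<gamma> (indicator {0::real})"
  proof (rule integral_dominated_convergence[where w = "indicator {-1..1::real}"])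
    show "(indicator {0::real} :: real \<Rightarrow> real) \<in> borel_measurable \<gamma>" using sets by simp
    show "tent k \<in> borel_measurable \<gamma>" for k using meas_gamma[OF V(1) tent_cont] .
    show "integrable \<gamma> (indicator {-1..1::real} :: real \<Rightarrow> real)" by (rule integrable_real_indicator) (use sets fin in auto)
    show "AE x in \<gamma>. (\<lambda>k. tent k x) \<longlonglongrightarrow> indicator {0} x"
    proof (rule AE_I2)
      fix x :: real
      show "(\<lambda>k. tent k x) \<longlonglongrightarrow> indicator {0} x"
      proof (cases "x = 0")
        case True then show ?thesis by (simp add: tent_def)
      next
        case False
        then have ax: "\<bar>x\<bar> > 0" by simp
        obtain N :: nat where N: "real N > 1 / \<bar>x\<bar>" using reals_Archimedean2 by blast
        have "eventually (\<lambda>k. tent k x = 0) sequentially"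
          unfolding eventually_sequentially
        proof (intro exI allI impI)
          fix k assume "N \<le> k"
          then have "real (Suc k) > 1 / \<bar>x\<bar>" using N by linarith
          then have "real (Suc k) * \<bar>x\<bar> > 1" using ax by (simp add: field_simps)
          then show "tent k x = 0" by (simp add: tent_def)
        qed
        then have "(\<lambda>k. tent k x) \<longlonglongrightarrow> 0" by (rule tendsto_eventually)
        then show ?thesis using False by simp
      qed
    qed
    show "AE x in \<gamma>. norm (tent k x) \<le> indicator {-1..1} x" for k
    proof (rule AE_I2)
      fix x :: real
      show "norm (tent k x) \<le> indicator {-1..1} x"
      proof (cases "\<bar>x\<bar> \<le> 1")
        case True then show ?thesis by (auto simp: tent_def indicator_def)
      next
        case False
        then have "real (Suc k) * \<bar>x\<bar> \<ge> 1"
          using mult_mono[of 1 "real (Suc k)" 1 "\<bar>x\<bar>"] by simp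
        then show ?thesis by (simp add: tent_def)
      qed
    qed
  qed
  moreover have "(\<lambda>k. integral\<^sup>L \<gamma> (tent k)) = (\<lambda>k. integral\<^sup>L \<gamma> (tent 0))"
    by (rule ext) (rule eq)
  moreover have "integral\<^sup>L \<gamma> (indicator {0::real} :: real \<Rightarrow> real) = measure \<gamma> {0}"
    using sets_eq_imp_space_eq[OF V(1)] by simp
  ultimately have "(\<lambda>k. integral\<^sup>L \<gamma> (tent 0)) \<longlonglongrightarrow> measure \<gamma> {0}"
    by simp
  then have "integral\<^sup>L \<gamma> (tent 0) = measure \<gamma> {0}" by (simp add: LIMSEQ_const_iff)
  then show ?thesis using lim[of 0] by simp
qed



lemma card_lower:
  assumes "\<Lambda> \<subseteq> \<int>" "\<And>a. g a \<in> \<Lambda> \<and> a \<le> g a \<and> g a \<le> a + real N"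
  shows "real (card (window \<Lambda> n)) \<ge> 2 * real n / real (Suc N) - 3"
proof -
  define P where "P = Suc N"
  define J where "J = int (n div P)"
  define f where "f j = g (real_of_int j * real P)" for j :: int
  have P0: "real P > 0" by (simp add: P_def)
  have mono: "f i < f j" if "i < j" for i j
  proof -
    have "f i \<le> real_of_int i * real P + real N" using assms(2) unfolding f_def by blast
    also have "\<dots> < real_of_int (i + 1) * real P" by (simp add: P_def algebra_simps)
    also have "\<dots> \<le> real_of_int j * real P" using that P0 by (intro mult_right_mono) auto
    also have "\<dots> \<le> f j" using assms(2) unfolding f_def by blast
    finally show ?thesis .
  qed
  have inj: "inj_on f {-(J-1)..J-1}"
    by (metis inj_on_def linorder_neq_iff mono order_less_irrefl)
  have JP: "real_of_int J * real P \<le> real n"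
  proof -
    have "n div P * P \<le> n" by simp
    then have "real (n div P * P) \<le> real n" by linarith
    then show ?thesis by (simp add: J_def)
  qed
  have sub: "f ` {-(J-1)..J-1} \<subseteq> window \<Lambda> n"
  proof
    fix y assume "y \<in> f ` {-(J-1)..J-1}"
    then obtain j where j: "j \<in> {-(J-1)..J-1}" "y = f j" by auto
    have a: "y \<in> \<Lambda>" "real_of_int j * real P \<le> y" "y \<le> real_of_int j * real P + real N"
      using assms(2) j unfolding f_def by auto
    have "real_of_int j * real P \<ge> real_of_int (-(J-1)) * real P"
      using j P0 by (intro mult_right_mono) auto
    moreover have "real_of_int (-(J-1)) * real P \<ge> - real n" using JP P0 by (simp add: algebra_simps)
    moreover have "real_of_int j * real P \<le> real_of_int (J-1) * real P"
      using j P0 by (intro mult_right_mono) auto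
    moreover have "real_of_int (J-1) * real P + real N \<le> real n" using JP by (simp add: P_def algebra_simps)
    ultimately show "y \<in> window \<Lambda> n" using a unfolding window_def by auto
  qed
  have fin: "finite (window \<Lambda> n)"
  proof -
    have "window \<Lambda> n \<subseteq> {x \<in> \<int>. - real n \<le> x \<and> x \<le> real n}" using assms(1) unfolding window_def by auto
    then show ?thesis using finite_int_segment finite_subset by blast
  qed
  have "card {-(J-1)..J-1} \<le> card (window \<Lambda> n)"
    using card_inj_on_le[OF inj sub fin] .
  then have c1: "real (nat (2 * J - 1)) \<le> real (card (window \<Lambda> n))"
    by (simp add: algebra_simps)
  have "real n < (real_of_int J + 1) * real P"
  proof -
    have m: "n mod P < P" by (simp add: P_def)
    have e: "n div P * P + n mod P = n" by simp
    have "(n div P + 1) * P = n div P * P + P" by simp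
    then have "n < (n div P + 1) * P" using e m by linarith
    then have "real n < real ((n div P + 1) * P)" by linarith
    then show ?thesis by (simp add: J_def algebra_simps)
  qed
  then have "2 * real n / real P < 2 * real_of_int J + 2" using P0 by (simp add: field_simps)
  moreover have "real_of_int (2 * J - 1) \<le> real (nat (2 * J - 1))" by simp
  ultimately show ?thesis using c1 unfolding P_def by linarith
qed

lemma dens_pos:
  assumes "\<Lambda> \<subseteq> \<int>" "rel_dense \<Lambda>"
    and lim: "(\<lambda>n. real (card (window \<Lambda> n)) / (2 * real n)) \<longlonglongrightarrow> c"
  shows "c > 0"
proof -
  obtain R where R: "R > 0" "\<forall>a. \<exists>x\<in>\<Lambda>. a \<le> x \<and> x \<le> a + R" using assms(2) unfolding rel_dense_def by blast
  define N where "N = nat \<lceil>R\<rceil>"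
  have RN: "R \<le> real N" unfolding N_def by linarith
  obtain g where g: "\<And>a. g a \<in> \<Lambda> \<and> a \<le> g a \<and> g a \<le> a + R" using R(2) by metis
  have g2: "g a \<in> \<Lambda> \<and> a \<le> g a \<and> g a \<le> a + real N" for a using g[of a] RN by auto
  have low: "real (card (window \<Lambda> n)) / (2 * real n) \<ge> 1 / real (Suc N) - 3 / (2 * real n)" if "n \<ge> 1" for n
  proof -
    have "real (card (window \<Lambda> n)) \<ge> 2 * real n / real (Suc N) - 3" by (rule card_lower[OF assms(1) g2])
    then have "real (card (window \<Lambda> n)) / (2 * real n) \<ge> (2 * real n / real (Suc N) - 3) / (2 * real n)"
      using that by (intro divide_right_mono) auto
    also have "(2 * real n / real (Suc N) - 3) / (2 * real n) = 1 / real (Suc N) - 3 / (2 * real n)"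
      using that by (simp add: field_simps)
    finally show ?thesis .
  qed
  have l2: "(\<lambda>n. 1 / real (Suc N) - 3 / (2 * real n)) \<longlonglongrightarrow> 1 / real (Suc N) - 0"
  proof -
    have e: "(\<lambda>n. 3 / (2 * real n)) = (\<lambda>n. (3/2) * inverse (real n))" by (auto simp: field_simps)
    have h: "(\<lambda>n. 3 / (2 * real n)) \<longlonglongrightarrow> 0"
      unfolding e by (rule tendsto_mult_right_zero) (rule lim_inverse_n)
    show ?thesis by (rule tendsto_diff[OF tendsto_const h])
  qed
  have "1 / real (Suc N) \<le> c"
    using LIMSEQ_le[OF l2 lim] low by auto
  moreover have "1 / real (Suc N) > 0" by simp
  ultimately show ?thesis by linarith
qed



definition blk :: "real set \<Rightarrow> nat \<Rightarrow> real set" where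
  "blk \<Lambda> m = (\<lambda>x. fact m + x) ` window \<Lambda> m"

lemma card_int_window:
  fixes F :: "real set" and K :: nat
  assumes "F \<subseteq> \<int>" "finite F" and that: "x \<in> \<int>"
  shows "card {y\<in>F. \<bar>x - y\<bar> \<le> real K} \<le> 2 * K + 1"
proof -
  have inj: "inj_on (\<lambda>y. \<lfloor>x - y\<rfloor>) {y\<in>F. \<bar>x - y\<bar> \<le> real K}"
  proof (rule inj_onI)
    fix y z assume yz: "y \<in> {y\<in>F. \<bar>x - y\<bar> \<le> real K}" "z \<in> {y\<in>F. \<bar>x - y\<bar> \<le> real K}"
      and e: "\<lfloor>x - y\<rfloor> = \<lfloor>x - z\<rfloor>"
    have "x - y \<in> \<int>" "x - z \<in> \<int>" using yz assms that by (auto intro: Ints_diff)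
    then have "x - y = x - z" using e by (metis floor_of_int Ints_cases)
    then show "y = z" by simp
  qed
  have sub: "(\<lambda>y. \<lfloor>x - y\<rfloor>) ` {y\<in>F. \<bar>x - y\<bar> \<le> real K} \<subseteq> {- int K .. int K}"
  proof
    fix k assume "k \<in> (\<lambda>y. \<lfloor>x - y\<rfloor>) ` {y\<in>F. \<bar>x - y\<bar> \<le> real K}"
    then obtain y where y: "y \<in> F" "\<bar>x - y\<bar> \<le> real K" "k = \<lfloor>x - y\<rfloor>" by auto
    have "x - y \<in> \<int>" using y assms that by (auto intro: Ints_diff)
    then obtain z where z: "x - y = of_int z" by (auto elim: Ints_cases)
    then have "k = z" using y by simp
    moreover have "\<bar>of_int z :: real\<bar> \<le> of_int (int K)" using y z by simp
    then have "\<bar>z\<bar> \<le> int K" by linarith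
    ultimately show "k \<in> {- int K .. int K}" by auto
  qed
  have "card {y\<in>F. \<bar>x - y\<bar> \<le> real K} \<le> card {- int K .. int K}"
    using card_inj_on_le[OF inj sub] by simp
  also have "\<dots> = 2 * K + 1" by simp
  finally show ?thesis .
qed

lemma diff_sum_lin:
  fixes F :: "real set" and K :: nat
  assumes "F \<subseteq> \<int>" "finite F" "\<And>x. \<bar>x\<bar> > real K \<Longrightarrow> \<phi> x = 0" "\<And>x. \<bar>\<phi> x\<bar> \<le> B"
  shows "\<bar>diff_sum F \<phi>\<bar> \<le> real (card F) * (real (2 * K + 1) * B)"
proof -
  have B0: "B \<ge> 0" using assms(4)[of 0] by linarith
  have "\<bar>diff_sum F \<phi>\<bar> = \<bar>\<Sum>x\<in>F. \<Sum>y\<in>F. \<phi> (x - y)\<bar>"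
    unfolding diff_sum_def by (simp add: sum.cartesian_product case_prod_unfold)
  also have "\<dots> \<le> (\<Sum>x\<in>F. \<bar>\<Sum>y\<in>F. \<phi> (x - y)\<bar>)" by (rule sum_abs)
  also have "\<dots> \<le> (\<Sum>x\<in>F. real (2 * K + 1) * B)"
  proof (rule sum_mono)
    fix x assume x: "x \<in> F"
    have "(\<Sum>y\<in>F. \<phi> (x - y)) = (\<Sum>y\<in>{y\<in>F. \<bar>x - y\<bar> \<le> real K}. \<phi> (x - y))"
    proof -
      have h: "\<And>y. \<not> \<bar>x - y\<bar> \<le> real K \<Longrightarrow> \<phi> (x - y) = 0" using assms(3) by simp
      show ?thesis using assms(2) h by (intro sum.mono_neutral_right) auto
    qed
    also have "\<bar>\<dots>\<bar> \<le> (\<Sum>y\<in>{y\<in>F. \<bar>x - y\<bar> \<le> real K}. \<bar>\<phi> (x - y)\<bar>)" by (rule sum_abs)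
    also have "\<dots> \<le> (\<Sum>y\<in>{y\<in>F. \<bar>x - y\<bar> \<le> real K}. B)" using assms(4) by (intro sum_mono) auto
    also have "\<dots> = real (card {y\<in>F. \<bar>x - y\<bar> \<le> real K}) * B" by simp
    also have "\<dots> \<le> real (2 * K + 1) * B"
      using card_int_window[OF assms(1,2), of x K] x assms(1) B0
      by (intro mult_right_mono) auto
    finally show "\<bar>\<Sum>y\<in>F. \<phi> (x - y)\<bar> \<le> real (2 * K + 1) * B" .
  qed
  also have "\<dots> = real (card F) * (real (2 * K + 1) * B)" by simp
  finally show ?thesis .
qed

lemma diff_sum_UN:
  assumes "finite I" "\<And>i. i \<in> I \<Longrightarrow> finite (A i)"
    and sep: "\<And>i j x y. i \<in> I \<Longrightarrow> j \<in> I \<Longrightarrow> i \<noteq> j \<Longrightarrow> x \<in> A i \<Longrightarrow> y \<in> A j \<Longrightarrow> \<phi> (x - y) = 0 \<and> x \<noteq> y"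
  shows "diff_sum (\<Union>i\<in>I. A i) \<phi> = (\<Sum>i\<in>I. diff_sum (A i) \<phi>)"
    and "card (\<Union>i\<in>I. A i) = (\<Sum>i\<in>I. card (A i))"
proof -
  let ?U = "\<Union>i\<in>I. A i"
  have finU: "finite ?U" using assms(1,2) by blast
  have "diff_sum ?U \<phi> = (\<Sum>p\<in>(\<Union>i\<in>I. A i \<times> A i). \<phi> (fst p - snd p))"
    unfolding diff_sum_def
  proof (rule sum.mono_neutral_right)
    show "finite (?U \<times> ?U)" using finU by simp
    show "(\<Union>i\<in>I. A i \<times> A i) \<subseteq> ?U \<times> ?U" by blast
    show "\<forall>p\<in>?U \<times> ?U - (\<Union>i\<in>I. A i \<times> A i). \<phi> (fst p - snd p) = 0"
    proof
      fix p assume p: "p \<in> ?U \<times> ?U - (\<Union>i\<in>I. A i \<times> A i)"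
      obtain x y where xy: "p = (x,y)" by (cases p)
      from p xy obtain i j where ij: "i \<in> I" "j \<in> I" "x \<in> A i" "y \<in> A j" by auto
      have "i \<noteq> j" using p xy ij by auto
      then show "\<phi> (fst p - snd p) = 0" using sep[OF ij(1,2) _ ij(3,4)] xy by simp
    qed
  qed
  also have "\<dots> = (\<Sum>i\<in>I. \<Sum>p\<in>A i \<times> A i. \<phi> (fst p - snd p))"
  proof (rule sum.UNION_disjoint)
    show "finite I" by fact
    show "\<forall>i\<in>I. finite (A i \<times> A i)" using assms(2) by blast
    show "\<forall>i\<in>I. \<forall>j\<in>I. i \<noteq> j \<longrightarrow> A i \<times> A i \<inter> A j \<times> A j = {}"
      using sep by blast
  qed
  finally show "diff_sum ?U \<phi> = (\<Sum>i\<in>I. diff_sum (A i) \<phi>)" unfolding diff_sum_def .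
  show "card ?U = (\<Sum>i\<in>I. card (A i))"
  proof (rule card_UN_disjoint)
    show "finite I" by fact
    show "\<forall>i\<in>I. finite (A i)" using assms(2) by blast
    show "\<forall>i\<in>I. \<forall>j\<in>I. i \<noteq> j \<longrightarrow> A i \<inter> A j = {}" using sep by blast
  qed
qed

lemma fact_gap:
  assumes "3 \<le> m" "m < m'"
  shows "fact m + m + 2 * m' \<le> (fact m' :: nat)"
proof -
  obtain j where j: "m' = Suc j" using assms by (cases m') auto
  have mj: "m \<le> j" using assms j by simp
  have f1: "fact m \<le> (fact j :: nat)" using mj by (rule fact_mono)
  have "fact 3 \<le> (fact j :: nat)" using assms mj by (intro fact_mono) auto
  then have f6: "6 \<le> (fact j :: nat)" by (simp add: fact_numeral)
  have "fact m' = (fact j :: nat) + j * fact j" using j by simp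
  moreover have "6 * j \<le> j * fact j" using f6 by simp
  moreover have "j \<ge> 3" using assms mj by simp
  ultimately show ?thesis using f1 mj j by linarith
qed

lemma blk_range:
  assumes "x \<in> blk \<Lambda> m"
  shows "fact m - real m \<le> x \<and> x \<le> fact m + real m"
  using assms unfolding blk_def window_def by auto

lemma blk_sep:
  assumes "3 \<le> m" "m < m'" "x \<in> blk \<Lambda> m" "y \<in> blk \<Lambda> m'"
  shows "y - x \<ge> real m'"
proof -
  have "real (fact m + m + 2 * m') \<le> real (fact m')" using fact_gap[OF assms(1,2)] by linarith
  then have "fact m + real m + 2 * real m' \<le> fact m'" by (simp add: of_nat_fact)
  then show ?thesis using blk_range[OF assms(3)] blk_range[OF assms(4)] by linarith
qed

lemma blk_sep2:
  assumes "3 \<le> m" "3 \<le> m'" "m \<noteq> m'" "x \<in> blk \<Lambda> m" "y \<in> blk \<Lambda> m'"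
  shows "\<bar>x - y\<bar> \<ge> real (max m m')"
proof (cases "m < m'")
  case True then show ?thesis using blk_sep[OF assms(1) True assms(4,5)] by (simp add: max_def)
next
  case False
  then have "m' < m" using assms(3) by simp
  then show ?thesis using blk_sep[OF assms(2) _ assms(5,4)] by (simp add: max_def)
qed

lemma blk_props:
  assumes "\<Lambda> \<subseteq> \<int>"
  shows "finite (blk \<Lambda> m)" "card (blk \<Lambda> m) = card (window \<Lambda> m)" "blk \<Lambda> m \<subseteq> \<int>"
    "diff_sum (blk \<Lambda> m) \<phi> = diff_sum (window \<Lambda> m) \<phi>"
proof -
  have inj: "inj_on (\<lambda>x. fact m + x :: real) A" for A by (auto intro: inj_onI)
  show "finite (blk \<Lambda> m)" unfolding blk_def using finite_window[OF assms] by simp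
  show "card (blk \<Lambda> m) = card (window \<Lambda> m)" unfolding blk_def by (rule card_image[OF inj])
  have "(fact m :: real) \<in> \<int>" by (metis Ints_of_nat of_nat_fact)
  then show "blk \<Lambda> m \<subseteq> \<int>" unfolding blk_def window_def using assms by (auto intro: Ints_add)
  let ?h = "\<lambda>p. (fact m + fst p, fact m + snd p) :: real \<times> real"
  have e: "blk \<Lambda> m \<times> blk \<Lambda> m = ?h ` (window \<Lambda> m \<times> window \<Lambda> m)"
    unfolding blk_def by force
  have injh: "inj_on ?h A" for A by (auto intro: inj_onI)
  show "diff_sum (blk \<Lambda> m) \<phi> = diff_sum (window \<Lambda> m) \<phi>"
    unfolding diff_sum_def e by (subst sum.reindex[OF injh]) simp
qed

lemma card_window_le:
  assumes "\<Lambda> \<subseteq> \<int>" shows "card (window \<Lambda> m) \<le> 2 * m + 1"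
proof -
  have "window \<Lambda> m \<subseteq> of_int ` {- int m .. int m}"
  proof
    fix x assume x: "x \<in> window \<Lambda> m"
    then obtain z where z: "x = of_int z" using assms unfolding window_def by (auto elim: Ints_cases)
    then have "\<bar>z\<bar> \<le> int m" using x unfolding window_def by auto
    then have "z \<in> {- int m .. int m}" by auto
    then show "x \<in> of_int ` {- int m .. int m}" using z by (intro image_eqI) auto
  qed
  then have "card (window \<Lambda> m) \<le> card (of_int ` {- int m .. int m} :: real set)"
    by (intro card_mono) auto
  also have "\<dots> \<le> card {- int m .. int m}" by (rule card_image_le) simp
  finally show ?thesis by simp
qed


definition Mf :: "nat \<Rightarrow> nat" where
  "Mf n = (LEAST m. 3 \<le> m \<and> n < fact m + m)"

lemma Mf_props:
  shows "3 \<le> Mf n" "n < fact (Mf n) + Mf n" "\<And>m. 3 \<le> m \<Longrightarrow> m < Mf n \<Longrightarrow> fact m + m \<le> n"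
proof -
  have ex: "3 \<le> n + 3 \<and> n < fact (n + 3) + (n + 3)" by simp
  have "3 \<le> Mf n \<and> n < fact (Mf n) + Mf n" unfolding Mf_def by (rule LeastI[of _ "n+3"]) (rule ex)
  then show "3 \<le> Mf n" "n < fact (Mf n) + Mf n" by auto
  fix m assume "3 \<le> m" "m < Mf n"
  then show "fact m + m \<le> n" using not_less_Least[of m "\<lambda>m. 3 \<le> m \<and> n < fact m + m"]
    unfolding Mf_def by auto
qed

lemma Mf_large:
  assumes "fact M0 + M0 \<le> n" shows "M0 < Mf n"
proof (rule ccontr)
  assume "\<not> M0 < Mf n"
  then have "Mf n \<le> M0" by simp
  moreover have "fact (Mf n) \<le> (fact M0 :: nat)" using \<open>Mf n \<le> M0\<close> by (rule fact_mono)
  ultimately have "fact (Mf n) + Mf n \<le> (fact M0 :: nat) + M0" by linarith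
  then show False using Mf_props(2)[of n] assms by linarith
qed

lemma window_blk_full:
  assumes "3 \<le> m" "m < Mf n"
  shows "window (blk \<Lambda> m) n = blk \<Lambda> m"
proof -
  have h: "fact m + m \<le> n" by (rule Mf_props(3)[OF assms])
  have "real (fact m + m) \<le> real n" using h by linarith
  then have h': "fact m + real m \<le> real n" by (simp add: of_nat_fact)
  have "real m \<le> real (fact m)" using fact_ge_self[of m] by linarith
  then have h2: "real m \<le> fact m" by (simp add: of_nat_fact)
  show ?thesis unfolding window_def using blk_range[of _ \<Lambda> m] h' h2 by force
qed

lemma window_blk_empty:
  assumes "Mf n < m"
  shows "window (blk \<Lambda> m) n = {}"
proof -
  have "fact (Mf n) + Mf n + 2 * m \<le> (fact m :: nat)" by (rule fact_gap[OF Mf_props(1) assms])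
  then have "n + m < fact m" using Mf_props(2)[of n] by linarith
  then have "real (n + m) < real (fact m)" by linarith
  then have "real n + real m < fact m" by (simp add: of_nat_fact)
  then show ?thesis unfolding window_def using blk_range[of _ \<Lambda> m] by force
qed

lemma window_Gamma:
  "window (\<Union>m\<in>{3::nat..}. blk \<Lambda> m) n = (\<Union>m\<in>{3..Mf n}. window (blk \<Lambda> m) n)"
proof -
  have "window (\<Union>m\<in>{3::nat..}. blk \<Lambda> m) n = (\<Union>m\<in>{3::nat..}. window (blk \<Lambda> m) n)"
    unfolding window_def by blast
  also have "\<dots> = (\<Union>m\<in>{3..Mf n}. window (blk \<Lambda> m) n)"
  proof (intro equalityI subsetI)
    fix x assume "x \<in> (\<Union>m\<in>{3::nat..}. window (blk \<Lambda> m) n)"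
    then obtain m where m: "3 \<le> m" "x \<in> window (blk \<Lambda> m) n" by auto
    then have "\<not> Mf n < m" using window_blk_empty[of n m \<Lambda>] by auto
    then show "x \<in> (\<Union>m\<in>{3..Mf n}. window (blk \<Lambda> m) n)" using m by auto
  qed auto
  finally show ?thesis .
qed

lemma fact_cubic: "(k+1)*(k+2)*(k+3) \<le> (fact (k+3) :: nat)"
proof -
  have e: "fact (Suc (Suc (Suc k))) = Suc (Suc (Suc k)) * (Suc (Suc k) * (Suc k * (fact k :: nat)))"
    by simp
  have e2: "Suc (Suc (Suc k)) * (Suc (Suc k) * (Suc k * (fact k :: nat))) = ((k+1)*(k+2)*(k+3)) * fact k"
    by (simp add: algebra_simps)
  have f1: "1 \<le> (fact k :: nat)" by (simp add: Suc_leI)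
  have a: "(k+1)*(k+2)*(k+3) \<le> ((k+1)*(k+2)*(k+3)) * (fact k :: nat)"
    by (metis f1 mult_le_mono2 mult.right_neutral)
  have kk: "k + 3 = Suc (Suc (Suc k))" by simp
  have b: "fact (k+3) = ((k+1)*(k+2)*(k+3)) * (fact k :: nat)" by (simp only: kk e e2)
  show ?thesis using a b by linarith
qed

lemma card_Gamma_bound:
  assumes "\<Lambda> \<subseteq> \<int>" "4 \<le> Mf n"
  shows "card (window (\<Union>m\<in>{3::nat..}. blk \<Lambda> m) n) * (Mf n - 3) \<le> 10 * n"
proof -
  define M where "M = Mf n"
  obtain k where k: "M = k + 4" using assms(2) unfolding M_def by (metis add.commute le_Suc_ex)
  have "card (window (\<Union>m\<in>{3::nat..}. blk \<Lambda> m) n) \<le> (\<Sum>m\<in>{3..M}. card (window (blk \<Lambda> m) n))"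
    unfolding window_Gamma M_def by (rule card_UN_le) simp
  also have "\<dots> \<le> (\<Sum>m\<in>{3..M}. 2 * M + 1)"
  proof (rule sum_mono)
    fix m assume m: "m \<in> {3..M}"
    have "card (window (blk \<Lambda> m) n) \<le> card (blk \<Lambda> m)"
      unfolding window_def using blk_props(1)[OF assms(1)] by (intro card_mono) auto
    also have "\<dots> \<le> 2 * m + 1" using blk_props(2)[OF assms(1)] card_window_le[OF assms(1)] by simp
    finally show "card (window (blk \<Lambda> m) n) \<le> 2 * M + 1" using m by simp
  qed
  also have "\<dots> = (M - 2) * (2 * M + 1)" by simp
  also have "\<dots> = (k + 2) * (2 * k + 9)" using k by simp
  finally have c: "card (window (\<Union>m\<in>{3::nat..}. blk \<Lambda> m) n) \<le> (k + 2) * (2 * k + 9)" .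
  have "fact (k+3) + (k+3) \<le> n" using Mf_props(3)[of "k+3" n] k unfolding M_def by simp
  then have nb: "(k+1)*(k+2)*(k+3) \<le> n" using fact_cubic[of k] by linarith
  have mk: "Mf n - 3 = k + 1" using k unfolding M_def by simp
  have "card (window (\<Union>m\<in>{3::nat..}. blk \<Lambda> m) n) * (Mf n - 3) \<le> (k + 2) * (2 * k + 9) * (k + 1)"
    unfolding mk by (rule mult_right_mono[OF c]) simp
  also have "\<dots> \<le> 10 * ((k+1)*(k+2)*(k+3))"
  proof -
    have "(2 * k + 9) \<le> 10 * (k+3)" by simp
    then have "(k + 2) * (k + 1) * (2 * k + 9) \<le> (k + 2) * (k + 1) * (10 * (k+3))" by (rule mult_left_mono) simp
    then show ?thesis by (simp add: algebra_simps)
  qed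
  also have "\<dots> \<le> 10 * n" using nb by simp
  finally show ?thesis .
qed

lemma dens_Gamma:
  assumes "\<Lambda> \<subseteq> \<int>"
  shows "(\<lambda>n. real (card (window (\<Union>m\<in>{3::nat..}. blk \<Lambda> m) n)) / (2 * real n)) \<longlonglongrightarrow> 0"
proof (rule LIMSEQ_I)
  fix r :: real assume r: "r > 0"
  obtain M0 :: nat where M0: "real M0 > 3 + 5 / r" using reals_Archimedean2 by blast
  have "5 / r > 0" using r by simp
  then have "real M0 > 3" using M0 by linarith
  then have M04: "M0 \<ge> 4" by simp
  show "\<exists>no. \<forall>n\<ge>no. norm (real (card (window (\<Union>m\<in>{3::nat..}. blk \<Lambda> m) n)) / (2 * real n) - 0) < r"
  proof (intro exI allI impI)
    fix n assume n: "fact M0 + M0 \<le> n"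
    let ?c = "card (window (\<Union>m\<in>{3::nat..}. blk \<Lambda> m) n)"
    have M: "M0 < Mf n" by (rule Mf_large[OF n])
    then have M4: "4 \<le> Mf n" using M04 by simp
    from card_Gamma_bound[OF assms M4] have "real (?c * (Mf n - 3)) \<le> real (10 * n)" by linarith
    then have b: "real ?c * (real (Mf n) - 3) \<le> 10 * real n" using M4 by (simp add: of_nat_diff)
    have "n > 0" using n M04 by linarith
    then have npos: "real n > 0" by simp
    have d: "real (Mf n) - 3 > 5 / r" using M M0 by linarith
    have lt: "real ?c < 2 * real n * r"
    proof (cases "?c = 0")
      case True then show ?thesis using npos r by simp
    next
      case False
      then have cpos: "real ?c > 0" by simp
      have "real ?c * (5 / r) < real ?c * (real (Mf n) - 3)" by (rule mult_strict_left_mono[OF d cpos])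
      then have "real ?c * (5 / r) < 10 * real n" using b by linarith
      then have "real ?c * 5 < 10 * real n * r" using r by (simp add: field_simps)
      then show ?thesis by linarith
    qed
    show "norm (real ?c / (2 * real n) - 0) < r"
      using lt npos by (simp add: field_simps)
  qed
qed


lemma test_fun_bounds:
  fixes \<phi> :: "real \<Rightarrow> real"
  assumes "test_fun \<phi>"
  obtains K :: nat and B :: real where "\<And>x. \<bar>x\<bar> > real K \<Longrightarrow> \<phi> x = 0" "\<And>x. \<bar>\<phi> x\<bar> \<le> B"
proof -
  have cS: "compact (closure {x. \<phi> x \<noteq> 0})" and cont: "continuous_on UNIV \<phi>" using assms unfolding test_fun_def by auto
  have "bounded (closure {x. \<phi> x \<noteq> 0})" by (rule compact_imp_bounded[OF cS])
  then have "\<exists>b. \<forall>x\<in>closure {x. \<phi> x \<noteq> 0}. norm x \<le> b" by (simp only: Elementary_Metric_Spaces.bounded_iff)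
  then obtain b where b: "\<forall>x\<in>closure {x. \<phi> x \<noteq> 0}. norm x \<le> b" by (elim exE)
  define K0 where "K0 = nat \<lceil>b\<rceil>"
  have K: "\<phi> x = 0" if "\<bar>x\<bar> > real K0" for x
  proof (rule ccontr)
    assume "\<phi> x \<noteq> 0"
    then have "x \<in> {x. \<phi> x \<noteq> 0}" by simp
    then have "x \<in> closure {x. \<phi> x \<noteq> 0}" using closure_subset by (rule subsetD[rotated])
    then have "norm x \<le> b" using b by (rule bspec[rotated])
    then have "\<bar>x\<bar> \<le> b" by simp
    moreover have "b \<le> real K0" unfolding K0_def by (rule real_nat_ceiling_ge)
    ultimately show False using that by linarith
  qed
  have "compact (\<phi> ` closure {x. \<phi> x \<noteq> 0})" using compact_continuous_image[OF continuous_on_subset[OF cont subset_UNIV] cS] .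
  then have "bounded (\<phi> ` closure {x. \<phi> x \<noteq> 0})" by (rule compact_imp_bounded)
  then have "\<exists>B. \<forall>y\<in>\<phi> ` closure {x. \<phi> x \<noteq> 0}. norm y \<le> B" by (simp only: Elementary_Metric_Spaces.bounded_iff)
  then obtain B where B: "\<forall>y\<in>\<phi> ` closure {x. \<phi> x \<noteq> 0}. norm y \<le> B" by (elim exE)
  have Bx: "\<bar>\<phi> x\<bar> \<le> max B 0" for x
  proof (cases "\<phi> x = 0")
    case False
    then have "x \<in> {x. \<phi> x \<noteq> 0}" by simp
    then have "x \<in> closure {x. \<phi> x \<noteq> 0}" using closure_subset by (rule subsetD[rotated])
    then have "\<phi> x \<in> \<phi> ` closure {x. \<phi> x \<noteq> 0}" by (rule imageI)
    then have "norm (\<phi> x) \<le> B" using B by (rule bspec[rotated])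
    then show ?thesis by simp
  qed simp
  show ?thesis by (rule that[of K0 "max B 0"]) (fact K, fact Bx)
qed

lemma step_E:
  fixes a b :: "nat \<Rightarrow> real"
  assumes H1: "(\<lambda>m. a m / (2 * real m)) \<longlonglongrightarrow> I" and H2: "(\<lambda>m. b m / (2 * real m)) \<longlonglongrightarrow> c"
    and c: "c > 0" and e: "\<epsilon> > 0"
  shows "\<exists>m1. \<forall>m\<ge>m1. \<bar>a m - (I / c) * b m\<bar> \<le> \<epsilon> * b m"
proof -
  have l: "(\<lambda>m. a m / (2 * real m) - (I / c) * (b m / (2 * real m))) \<longlonglongrightarrow> I - (I / c) * c"
    by (intro tendsto_intros H1 H2)
  then have l0: "(\<lambda>m. a m / (2 * real m) - (I / c) * (b m / (2 * real m))) \<longlonglongrightarrow> 0" using c by simp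
  have "\<epsilon> * c / 2 > 0" using c e by simp
  from LIMSEQ_D[OF l0 this] obtain N1 where
    N1: "\<And>m. m \<ge> N1 \<Longrightarrow> \<bar>a m / (2 * real m) - (I / c) * (b m / (2 * real m))\<bar> < \<epsilon> * c / 2" by auto
  have "eventually (\<lambda>m. b m / (2 * real m) > c / 2) sequentially"
    using H2 c by (intro order_tendstoD(1)) auto
  then obtain N2 where N2: "\<And>m. m \<ge> N2 \<Longrightarrow> b m / (2 * real m) > c / 2" unfolding eventually_sequentially by auto
  show ?thesis
  proof (intro exI allI impI)
    fix m assume m: "max (max N1 N2) 1 \<le> m"
    define x where "x = a m / (2 * real m)"
    define y where "y = b m / (2 * real m)"
    have mp: "2 * real m > 0" using m by simp
    have ax: "a m = 2 * real m * x" and by': "b m = 2 * real m * y" unfolding x_def y_def using mp by auto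
    have "\<bar>x - (I / c) * y\<bar> < \<epsilon> * c / 2" using N1[of m] m unfolding x_def y_def by auto
    moreover have "y > c / 2" using N2[of m] m unfolding y_def by auto
    moreover have "\<epsilon> * (c / 2) < \<epsilon> * y" using \<open>y > c / 2\<close> e by (rule mult_strict_left_mono)
    ultimately have "\<bar>x - (I / c) * y\<bar> \<le> \<epsilon> * y" by (simp add: algebra_simps)
    then have "2 * real m * \<bar>x - (I / c) * y\<bar> \<le> 2 * real m * (\<epsilon> * y)" using mp by simp
    moreover have "a m - (I / c) * b m = 2 * real m * (x - (I / c) * y)"
      unfolding ax by' by (simp add: algebra_simps)
    then have "\<bar>a m - (I / c) * b m\<bar> = 2 * real m * \<bar>x - (I / c) * y\<bar>"
      using mp by (simp add: abs_mult)
    ultimately show "\<bar>a m - (I / c) * b m\<bar> \<le> \<epsilon> * b m" unfolding by' by (simp add: algebra_simps)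
  qed
qed

lemma step_T:
  fixes b :: "nat \<Rightarrow> real"
  assumes H2: "(\<lambda>m. b m / (2 * real m)) \<longlonglongrightarrow> c" and c: "c > 0"
  shows "\<exists>m2. \<forall>m\<ge>m2. b m \<ge> T"
proof -
  have "eventually (\<lambda>m. b m / (2 * real m) > c / 2) sequentially"
    using H2 c by (intro order_tendstoD(1)) auto
  then obtain N2 where N2: "\<And>m. m \<ge> N2 \<Longrightarrow> b m / (2 * real m) > c / 2" unfolding eventually_sequentially by auto
  obtain N3 :: nat where N3: "real N3 > T / c" using reals_Archimedean2 by blast
  show ?thesis
  proof (intro exI allI impI)
    fix m assume m: "max (max N2 N3) 1 \<le> m"
    have mp: "2 * real m > 0" using m by simp
    have "b m / (2 * real m) > c / 2" using N2 m by simp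
    then have "b m > c * real m" using mp by (simp add: field_simps)
    moreover have "real m > T / c" using N3 m by linarith
    then have "c * real m > T" using c by (simp add: field_simps)
    ultimately show "b m \<ge> T" by linarith
  qed
qed


lemma count_main:
  fixes \<Lambda> :: "real set" and \<phi> :: "real \<Rightarrow> real" and K :: nat and B I c :: real
  assumes Z: "\<Lambda> \<subseteq> \<int>"
    and H1: "(\<lambda>m. diff_sum (window \<Lambda> m) \<phi> / (2 * real m)) \<longlonglongrightarrow> I"
    and H2: "(\<lambda>m. real (card (window \<Lambda> m)) / (2 * real m)) \<longlonglongrightarrow> c"
    and c: "c > 0"
    and K\<phi>: "\<And>x. \<bar>x\<bar> > real K \<Longrightarrow> \<phi> x = 0" and B\<phi>: "\<And>x. \<bar>\<phi> x\<bar> \<le> B"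
  shows "(\<lambda>n. gamma_fin (window (\<Union>m\<in>{3::nat..}. blk \<Lambda> m) n) \<phi>) \<longlonglongrightarrow> I / c"
proof (rule LIMSEQ_I)
  fix r :: real assume r: "r > 0"
  define \<epsilon> where "\<epsilon> = r / 4"
  have e: "\<epsilon> > 0" using r by (simp add: \<epsilon>_def)
  define a where "a m = diff_sum (window \<Lambda> m) \<phi>" for m
  define b where "b m = real (card (window \<Lambda> m))" for m
  define Lc where "Lc = I / c"
  define C2 where "C2 = real (2*K+1) * B + \<bar>Lc\<bar>"
  have B0: "B \<ge> 0" using B\<phi>[of 0] by linarith
  have C20: "C2 \<ge> 0" unfolding C2_def using B0 by simp
  obtain m1 where m1: "\<And>m. m \<ge> m1 \<Longrightarrow> \<bar>a m - Lc * b m\<bar> \<le> \<epsilon> * b m"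
    using step_E[of a I b c \<epsilon>] H1 H2 c e unfolding a_def b_def Lc_def by blast
  define T where "T = 8 * C2 / \<epsilon> + 1"
  obtain m2 where m2: "\<And>m. m \<ge> m2 \<Longrightarrow> b m \<ge> T"
    using step_T[of b c T] H2 c unfolding b_def by blast
  define m0 where "m0 = max (max m1 m2) (max (K+1) 4)"
  define V0 where "V0 = (\<Union>m\<in>{3..<m0}. blk \<Lambda> m)"
  define cV where "cV = card V0"
  define M1 where "M1 = 8 * m0 + cV + 1"
  have ET: "\<epsilon> * T = 8 * C2 + \<epsilon>" unfolding T_def using e by (simp add: field_simps)
  have T1: "T \<ge> 1" unfolding T_def using C20 e by simp
  show "\<exists>no. \<forall>n\<ge>no. norm (gamma_fin (window (\<Union>m\<in>{3::nat..}. blk \<Lambda> m) n) \<phi> - I / c) < r"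
  proof (intro exI allI impI)
    fix n assume n: "fact M1 + M1 \<le> n"
    define M where "M = Mf n"
    have MM1: "M1 < M" unfolding M_def by (rule Mf_large[OF n])
    have m0M: "m0 < M" using MM1 unfolding M1_def by simp
    have m04: "4 \<le> m0" "K + 1 \<le> m0" "m1 \<le> m0" "m2 \<le> m0" unfolding m0_def by auto
    define W where "W m = window (blk \<Lambda> m) n" for m
    define V where "V = (\<Union>m\<in>{3..<m0}. W m)"
    define A where "A i = (if i = 0 then V else W i)" for i
    define Ix where "Ix = insert 0 {m0..M}"
    define S where "S = window (\<Union>m\<in>{3::nat..}. blk \<Lambda> m) n"
    have S_eq: "S = (\<Union>i\<in>Ix. A i)"
    proof -
      have "S = (\<Union>m\<in>{3..M}. W m)" unfolding S_def W_def M_def by (rule window_Gamma)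
      also have "{3..M} = {3..<m0} \<union> {m0..M}" using m04 m0M by auto
      also have "(\<Union>m\<in>{3..<m0} \<union> {m0..M}. W m) = V \<union> (\<Union>m\<in>{m0..M}. W m)" unfolding V_def by blast
      also have "\<dots> = (\<Union>i\<in>Ix. A i)" unfolding Ix_def A_def using m04 by auto
      finally show ?thesis .
    qed
    have Wsub: "W m \<subseteq> blk \<Lambda> m" for m unfolding W_def window_def by auto
    have Wfin: "finite (W m)" for m using blk_props(1)[OF Z] Wsub finite_subset by blast
    have Wint: "W m \<subseteq> \<int>" for m using blk_props(3)[OF Z] Wsub by blast
    have Vsub: "V \<subseteq> V0" unfolding V_def V0_def using Wsub by blast
    have V0fin: "finite V0" unfolding V0_def using blk_props(1)[OF Z] by blast
    have Vfin: "finite V" using Vsub V0fin finite_subset by blast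
    have Vint: "V \<subseteq> \<int>" unfolding V_def using Wint by blast
    have Afin: "finite (A i)" for i unfolding A_def using Vfin Wfin by simp
    have sepA: "\<phi> (x - y) = 0 \<and> x \<noteq> y"
      if ij: "i \<in> Ix" "j \<in> Ix" "i \<noteq> j" and xy: "x \<in> A i" "y \<in> A j" for i j x y
    proof -
      obtain mx my where mx: "3 \<le> mx" "x \<in> blk \<Lambda> mx" and my: "3 \<le> my" "y \<in> blk \<Lambda> my"
        and neq: "mx \<noteq> my" and big: "m0 \<le> max mx my"
      proof (cases "i = 0")
        case True
        then have j: "j \<noteq> 0" "m0 \<le> j" "j \<le> M" using ij unfolding Ix_def by auto
        from True xy(1) obtain mx where mx: "mx \<in> {3..<m0}" "x \<in> W mx" unfolding A_def V_def by auto
        have "y \<in> W j" using xy(2) j unfolding A_def by simp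
        then show ?thesis using that[of mx j] mx Wsub j m04 by force
      next
        case False
        then have i: "m0 \<le> i" using ij unfolding Ix_def by auto
        show ?thesis
        proof (cases "j = 0")
          case True
          from True xy(2) obtain my where my: "my \<in> {3..<m0}" "y \<in> W my" unfolding A_def V_def by auto
          have "x \<in> W i" using xy(1) False unfolding A_def by simp
          then show ?thesis using that[of i my] my Wsub i m04 by force
        next
          case F2: False
          then have j: "m0 \<le> j" using ij unfolding Ix_def by auto
          have "x \<in> W i" "y \<in> W j" using xy False F2 unfolding A_def by auto
          then show ?thesis using that[of i j] Wsub i j m04 ij(3) by force
        qed
      qed
      have "\<bar>x - y\<bar> \<ge> real (max mx my)" by (rule blk_sep2[OF mx(1) my(1) neq mx(2) my(2)])
      moreover have "real (max mx my) \<ge> real K + 1" using big m04 by linarith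
      ultimately have "\<bar>x - y\<bar> > real K" by linarith
      then show ?thesis using K\<phi> by auto
    qed
    have finIx: "finite Ix" unfolding Ix_def by simp
    have N_eq: "diff_sum S \<phi> = (\<Sum>i\<in>Ix. diff_sum (A i) \<phi>)"
      unfolding S_eq by (rule diff_sum_UN(1)[OF finIx Afin sepA])
    have D_eq: "card S = (\<Sum>i\<in>Ix. card (A i))"
      unfolding S_eq by (rule diff_sum_UN(2)[OF finIx Afin sepA])
    have z: "0 \<notin> {m0..M}" using m04 by auto
    have ins: "{m0..M} = insert M {m0..<M}" using m0M by auto
    have Wfull: "W m = blk \<Lambda> m" if "m \<in> {m0..<M}" for m
      unfolding W_def M_def using that m04 by (intro window_blk_full) (auto simp: M_def)
    have sumA: "(\<Sum>m\<in>{m0..<M}. diff_sum (A m) \<phi>) = (\<Sum>m\<in>{m0..<M}. a m)"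
      using m04 by (intro sum.cong refl) (auto simp: A_def Wfull a_def blk_props(4)[OF Z])
    have sumB: "(\<Sum>m\<in>{m0..<M}. real (card (A m))) = (\<Sum>m\<in>{m0..<M}. b m)"
      using m04 by (intro sum.cong refl) (auto simp: A_def Wfull b_def blk_props(2)[OF Z])
    define dV where "dV = diff_sum V \<phi>"
    define cVn where "cVn = real (card V)"
    define dM where "dM = diff_sum (W M) \<phi>"
    define cM where "cM = real (card (W M))"
    define N where "N = diff_sum S \<phi>"
    define D where "D = real (card S)"
    define SA where "SA = (\<Sum>m\<in>{m0..<M}. a m)"
    define SB where "SB = (\<Sum>m\<in>{m0..<M}. b m)"
    have N2: "N = dV + dM + SA"
    proof -
      have "N = diff_sum (A 0) \<phi> + (\<Sum>m\<in>{m0..M}. diff_sum (A m) \<phi>)"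
        unfolding N_def N_eq Ix_def using z by (simp add: sum.insert)
      also have "(\<Sum>m\<in>{m0..M}. diff_sum (A m) \<phi>) = diff_sum (A M) \<phi> + (\<Sum>m\<in>{m0..<M}. diff_sum (A m) \<phi>)"
        unfolding ins by (simp add: sum.insert)
      finally have "N = diff_sum (A 0) \<phi> + (diff_sum (A M) \<phi> + (\<Sum>m\<in>{m0..<M}. diff_sum (A m) \<phi>))" .
      moreover have "A 0 = V" "A M = W M" using m0M m04 unfolding A_def by auto
      ultimately show ?thesis unfolding SA_def dV_def dM_def sumA[symmetric] by simp
    qed
    have D2: "D = cVn + cM + SB"
    proof -
      have "D = real (card (A 0)) + (\<Sum>m\<in>{m0..M}. real (card (A m)))"
        unfolding D_def D_eq Ix_def using z by (simp add: sum.insert)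
      also have "(\<Sum>m\<in>{m0..M}. real (card (A m))) = real (card (A M)) + (\<Sum>m\<in>{m0..<M}. real (card (A m)))"
        unfolding ins by (simp add: sum.insert)
      finally have "D = real (card (A 0)) + (real (card (A M)) + (\<Sum>m\<in>{m0..<M}. real (card (A m))))" .
      moreover have "A 0 = V" "A M = W M" using m0M m04 unfolding A_def by auto
      ultimately show ?thesis unfolding SB_def cVn_def cM_def sumB[symmetric] by simp
    qed
    have bV: "\<bar>dV - Lc * cVn\<bar> \<le> real cV * C2"
    proof -
      have "\<bar>dV\<bar> \<le> cVn * (real (2 * K + 1) * B)" unfolding dV_def cVn_def
        by (rule diff_sum_lin[OF Vint Vfin K\<phi> B\<phi>])
      moreover have "\<bar>Lc * cVn\<bar> = cVn * \<bar>Lc\<bar>" unfolding cVn_def by (simp add: abs_mult)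
      ultimately have "\<bar>dV - Lc * cVn\<bar> \<le> cVn * C2" unfolding C2_def by (simp add: algebra_simps)
      moreover have "cVn \<le> real cV" unfolding cVn_def cV_def using card_mono[OF V0fin Vsub] by simp
      ultimately show ?thesis using C20 by (meson mult_right_mono order_trans)
    qed
    have bM: "\<bar>dM - Lc * cM\<bar> \<le> (2 * real M + 1) * C2"
    proof -
      have "\<bar>dM\<bar> \<le> cM * (real (2 * K + 1) * B)" unfolding dM_def cM_def
        by (rule diff_sum_lin[OF Wint Wfin K\<phi> B\<phi>])
      moreover have "\<bar>Lc * cM\<bar> = cM * \<bar>Lc\<bar>" unfolding cM_def by (simp add: abs_mult)
      ultimately have "\<bar>dM - Lc * cM\<bar> \<le> cM * C2" unfolding C2_def by (simp add: algebra_simps)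
      moreover have "card (W M) \<le> 2 * M + 1"
      proof -
        have "card (W M) \<le> card (blk \<Lambda> M)" using card_mono[OF blk_props(1)[OF Z] Wsub] .
        also have "\<dots> \<le> 2 * M + 1" using blk_props(2)[OF Z] card_window_le[OF Z] by simp
        finally show ?thesis .
      qed
      then have "cM \<le> 2 * real M + 1" unfolding cM_def by linarith
      ultimately show ?thesis using C20 by (meson mult_right_mono order_trans)
    qed
    have bS: "\<bar>SA - Lc * SB\<bar> \<le> \<epsilon> * SB"
    proof -
      have "SA - Lc * SB = (\<Sum>m\<in>{m0..<M}. a m - Lc * b m)"
        unfolding SA_def SB_def by (simp add: sum_subtractf sum_distrib_left)
      then have "\<bar>SA - Lc * SB\<bar> \<le> (\<Sum>m\<in>{m0..<M}. \<bar>a m - Lc * b m\<bar>)" by (simp add: sum_abs)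
      also have "\<dots> \<le> (\<Sum>m\<in>{m0..<M}. \<epsilon> * b m)" using m04 by (intro sum_mono m1) auto
      also have "\<dots> = \<epsilon> * SB" unfolding SB_def by (simp add: sum_distrib_left)
      finally show ?thesis .
    qed
    have SBlow: "SB \<ge> real (M - m0) * T"
    proof -
      have "real (card {m0..<M}) * T \<le> SB" unfolding SB_def
        using m04 by (intro sum_bounded_below m2) auto
      then show ?thesis by simp
    qed
    have cVn0: "cVn \<ge> 0" "cM \<ge> 0" unfolding cVn_def cM_def by auto
    have DSB: "D \<ge> SB" using D2 cVn0 by linarith
    have Mm0: "real (M - m0) = real M - real m0" using m0M by (simp add: of_nat_diff)
    have Mm01: "real M - real m0 \<ge> 1" using m0M by linarith
    have key: "real cV * C2 + (2 * real M + 1) * C2 \<le> \<epsilon> * D"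
    proof -
      have "real M1 < real M" using MM1 by linarith
      then have h: "real cV + (2 * real M + 1) \<le> 8 * (real M - real m0)" unfolding M1_def by simp
      have "real cV * C2 + (2 * real M + 1) * C2 = (real cV + (2 * real M + 1)) * C2" by (simp add: algebra_simps)
      also have "\<dots> \<le> (8 * (real M - real m0)) * C2" using h C20 by (rule mult_right_mono)
      also have "\<dots> \<le> (real M - real m0) * (8 * C2 + \<epsilon>)" using Mm01 e by (simp add: algebra_simps)
      also have "\<dots> = (real M - real m0) * (\<epsilon> * T)" by (simp only: ET)
      also have "\<dots> = \<epsilon> * ((real M - real m0) * T)" by (simp add: algebra_simps)
      also have "\<dots> \<le> \<epsilon> * SB" using SBlow Mm0 e by (intro mult_left_mono) auto
      also have "\<dots> \<le> \<epsilon> * D" using DSB e by (intro mult_left_mono) auto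
      finally show ?thesis .
    qed
    have Dpos: "D > 0"
    proof -
      have "(real M - real m0) * T \<ge> 1 * 1" using Mm01 T1 by (intro mult_mono) auto
      then have "(real M - real m0) * T \<ge> 1" by simp
      moreover have "SB \<ge> (real M - real m0) * T" using SBlow unfolding Mm0 .
      ultimately show ?thesis using DSB by linarith
    qed
    have errb: "\<bar>N - Lc * D\<bar> \<le> 2 * \<epsilon> * D"
    proof -
      have "N - Lc * D = (dV - Lc * cVn) + (dM - Lc * cM) + (SA - Lc * SB)"
        unfolding N2 D2 by (simp add: algebra_simps)
      then have "\<bar>N - Lc * D\<bar> \<le> \<bar>dV - Lc * cVn\<bar> + \<bar>dM - Lc * cM\<bar> + \<bar>SA - Lc * SB\<bar>" by linarith
      also have "\<dots> \<le> real cV * C2 + (2 * real M + 1) * C2 + \<epsilon> * SB" using bV bM bS by linarith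
      also have "\<dots> \<le> \<epsilon> * D + \<epsilon> * D" using key mult_left_mono[OF DSB, of \<epsilon>] e by linarith
      finally show ?thesis by (simp add: algebra_simps)
    qed
    have Sne: "S \<noteq> {}" using Dpos unfolding D_def by auto
    have gf: "gamma_fin S \<phi> = N / D" unfolding gamma_fin_def N_def D_def using Sne by simp
    have "N / D - Lc = (N - Lc * D) / D" using Dpos by (simp add: diff_divide_distrib)
    then have "\<bar>N / D - Lc\<bar> = \<bar>N - Lc * D\<bar> / D" using Dpos by simp
    also have "\<dots> \<le> 2 * \<epsilon>" using errb Dpos by (simp add: divide_le_eq)
    also have "\<dots> < r" unfolding \<epsilon>_def using r by simp
    finally show "norm (gamma_fin (window (\<Union>m\<in>{3::nat..}. blk \<Lambda> m) n) \<phi> - I / c) < r"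
      using gf unfolding S_def Lc_def by simp
  qed
qed


lemma integral_scale:
  fixes f :: "'a \<Rightarrow> real"
  assumes r: "r \<ge> 0" and f: "f \<in> borel_measurable M"
  shows "integral\<^sup>L (scale_measure (ennreal r) M) f = r * integral\<^sup>L M f"
proof -
  have eq: "scale_measure (ennreal r) M = density M (\<lambda>_. ennreal r)"
  proof (rule measure_eqI)
    show "sets (scale_measure (ennreal r) M) = sets (density M (\<lambda>_. ennreal r))" by simp
    fix A assume "A \<in> sets (scale_measure (ennreal r) M)"
    then have "A \<in> sets M" by simp
    then show "emeasure (scale_measure (ennreal r) M) A = emeasure (density M (\<lambda>_. ennreal r)) A"
      by (simp add: emeasure_density_const)
  qed
  have "integral\<^sup>L (density M (\<lambda>_. r)) f = integral\<^sup>L M (\<lambda>x. r *\<^sub>R f x)"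
    using f r by (intro integral_density) auto
  then show ?thesis unfolding eq by simp
qed

theorem theorem6p1:
  fixes \<Lambda> :: "real set" and \<gamma> :: "real measure"
  assumes "\<Lambda> \<subseteq> \<int>"
    and "rel_dense \<Lambda>"
    and "is_dens_autocorr \<Lambda> \<gamma>"
  defines "\<Gamma> \<equiv> (\<Union>n\<in>{3::nat..}. (\<lambda>x. fact n + x) ` window \<Lambda> n)"
  shows "has_density \<Gamma> 0 \<and>
         has_density \<Lambda> (measure \<gamma> {0}) \<and>
         measure \<gamma> {0} \<noteq> 0 \<and>
         is_count_autocorr \<Gamma> (scale_measure (ennreal (1 / measure \<gamma> {0})) \<gamma>)"
proof -
  have G: "\<Gamma> = (\<Union>m\<in>{3::nat..}. blk \<Lambda> m)" unfolding \<Gamma>_def blk_def by simp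
  have V: "sets \<gamma> = sets borel" "\<And>K. compact K \<Longrightarrow> emeasure \<gamma> K < \<infinity>"
    "\<And>\<phi>. test_fun \<phi> \<Longrightarrow> (\<lambda>n. diff_sum (window \<Lambda> n) \<phi> / (2 * real n)) \<longlonglongrightarrow> integral\<^sup>L \<gamma> \<phi>"
    using assms(3) unfolding is_dens_autocorr_def vague_limit_def by auto
  have d0: "(\<lambda>n. real (card (window \<Lambda> n)) / (2 * real n)) \<longlonglongrightarrow> measure \<gamma> {0}"
    by (rule dens_gamma0[OF assms(1,3)])
  have cpos: "measure \<gamma> {0} > 0" by (rule dens_pos[OF assms(1,2) d0])
  have A: "has_density \<Gamma> 0" unfolding has_density_def G by (rule dens_Gamma[OF assms(1)])
  have B: "has_density \<Lambda> (measure \<gamma> {0})" unfolding has_density_def by (rule d0)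
  have C: "is_count_autocorr \<Gamma> (scale_measure (ennreal (1 / measure \<gamma> {0})) \<gamma>)"
    unfolding is_count_autocorr_def vague_limit_def
  proof (intro conjI allI impI)
    show "sets (scale_measure (ennreal (1 / measure \<gamma> {0})) \<gamma>) = sets borel" using V(1) by simp
    fix K :: "real set" assume "compact K"
    then have "emeasure \<gamma> K < \<infinity>" by (rule V(2))
    then show "emeasure (scale_measure (ennreal (1 / measure \<gamma> {0})) \<gamma>) K < \<infinity>"
      by (simp add: ennreal_mult_less_top)
  next
    fix \<phi> :: "real \<Rightarrow> real" assume t: "test_fun \<phi>"
    obtain K :: nat and Bd :: real where K: "\<And>x. \<bar>x\<bar> > real K \<Longrightarrow> \<phi> x = 0" and Bd: "\<And>x. \<bar>\<phi> x\<bar> \<le> Bd"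
      using test_fun_bounds[OF t] by blast
    have cont: "continuous_on UNIV \<phi>" using t unfolding test_fun_def by simp
    have "(\<lambda>n. gamma_fin (window (\<Union>m\<in>{3::nat..}. blk \<Lambda> m) n) \<phi>) \<longlonglongrightarrow> integral\<^sup>L \<gamma> \<phi> / measure \<gamma> {0}"
      by (rule count_main[OF assms(1) V(3)[OF t] d0 cpos K Bd])
    moreover have "integral\<^sup>L (scale_measure (ennreal (1 / measure \<gamma> {0})) \<gamma>) \<phi> = integral\<^sup>L \<gamma> \<phi> / measure \<gamma> {0}"
      using cpos by (subst integral_scale) (auto intro: meas_gamma[OF V(1) cont])
    ultimately show "(\<lambda>n. gamma_fin (window \<Gamma> n) \<phi>) \<longlonglongrightarrow> integral\<^sup>L (scale_measure (ennreal (1 / measure \<gamma> {0})) \<gamma>) \<phi>"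
      unfolding G by simp
  qed
  show ?thesis using A B C cpos by simp
qed

end
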